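(* Let $c^1,\dots,c^n$ be a lattice basis of $\mathbb{Z}^n$, $K=\{x\in\mathbb{R}^n: c^ix\ge0,\ i=1,\dots,n\}$, and $\bar x\in K\cap\mathbb{Z}^n\setminus\{0\}$. Then $$Q(\bar x)=\Big\{x\in\mathbb{R}^n:\ c^ix\ge0\ (i=1,\dots,n),\ \ \sum_{i=1}^k d^k_i c^ix\ge\sum_{i=1}^k d^k_i c^i\bar x\ (k=1,\dots,n)\Big\}.$$
   Context: A lattice basis of $\mathbb{Z}^n$ is a set of $n$ linearly independent vectors $c^1,\dots,c^n\in\mathbb{Z}^n$ such that every $v\in\mathbb{Z}^n$ equals $\sum_i\lambda_ic^i$ with all $\lambda_i\in\mathbb{Z}$. Lexicographic order: $x\prec y$ iff $x\ne y$ and $c^ix<c^iy$ for the smallest index $i$ with $c^ix\ne c^iy$. $Q(\bar x):=\operatorname{conv}\{x\in K\cap\mathbb{Z}^n: x\succeq\bar x\}$. For $k\in\{1,\dots,n\}$, $i\in\{1,\dots,k\}$: $d^k_k=1$; $d^k_{k-1}=c^k\bar x$ (if $k\ge2$); $d^k_i=c^k\bar x\prod_{j=i+1}^{k-1}(c^j\bar x+1)$ for $i\le k-2$. The inequality $\sum_{i=1}^k d^k_ic^ix\ge\sum_{i=1}^k d^k_ic^i\bar x$ is the $k$-th lex-cut associated with $\bar x$. *)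

theory Defs
  imports "HOL-Analysis.Analysis"
begin

text \<open>Vectors of R^n are elements of real^'n, where the index type 'n is finite and
  linearly ordered (the order gives the numbering 1..n of coordinates and of basis vectors).\<close>

definition int_vec :: "real^'n \<Rightarrow> bool" where
  "int_vec v \<longleftrightarrow> (\<forall>j. v $ j \<in> \<int>)"

definition lattice_basis :: "('n::finite \<Rightarrow> real^'n) \<Rightarrow> bool" where
  "lattice_basis c \<longleftrightarrow>
     (\<forall>i. int_vec (c i)) \<and> inj c \<and> independent (range c) \<and>
     (\<forall>v. int_vec v \<longrightarrow> (\<exists>l. (\<forall>i. l i \<in> \<int>) \<and> v = (\<Sum>i\<in>UNIV. l i *\<^sub>R c i)))"

definition lex_less :: "(('n::{finite,linorder}) \<Rightarrow> real^('n::{finite,linorder})) \<Rightarrow> real^('n::{finite,linorder}) \<Rightarrow> real^('n::{finite,linorder}) \<Rightarrow> bool" where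
  "lex_less c x y \<longleftrightarrow> x \<noteq> y \<and>
     (\<exists>i. c i \<bullet> x \<noteq> c i \<bullet> y \<and> (\<forall>j<i. c j \<bullet> x = c j \<bullet> y) \<and> c i \<bullet> x < c i \<bullet> y)"

definition lex_le :: "(('n::{finite,linorder}) \<Rightarrow> real^('n::{finite,linorder})) \<Rightarrow> real^('n::{finite,linorder}) \<Rightarrow> real^('n::{finite,linorder}) \<Rightarrow> bool" where
  "lex_le c x y \<longleftrightarrow> x = y \<or> lex_less c x y"

definition Q :: "(('n::{finite,linorder}) \<Rightarrow> real^('n::{finite,linorder})) \<Rightarrow> (real^('n::{finite,linorder})) set \<Rightarrow> real^('n::{finite,linorder}) \<Rightarrow> (real^('n::{finite,linorder})) set" where
  "Q c K xbar = convex hull {x \<in> K. int_vec x \<and> lex_le c xbar x}"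

text \<open>Coefficients d^k_i (meaningful for i <= k): d^k_k = 1, and for i < k
  d^k_i = c^k xbar * prod_{i<j<k} (c^j xbar + 1); for i = k-1 the product is empty,
  giving d^k_{k-1} = c^k xbar.\<close>
definition lexd :: "(('n::{finite,linorder}) \<Rightarrow> real^('n::{finite,linorder})) \<Rightarrow> real^('n::{finite,linorder}) \<Rightarrow> 'n \<Rightarrow> 'n \<Rightarrow> real" where
  "lexd c xbar k i = (if i = k then 1
      else (c k \<bullet> xbar) * (\<Prod>j\<in>{i<..<k}. (c j \<bullet> xbar + 1)))"

end

theory Submission
  imports Defs
begin

lemma prod_tele:
  fixes a :: "'a::linorder \<Rightarrow> real"
  assumes "finite A"
  shows "(\<Prod>j\<in>A. a j + 1) = 1 + (\<Sum>j\<in>A. a j * (\<Prod>l\<in>{l\<in>A. j < l}. a l + 1))"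
  using assms
proof (induction A rule: finite_linorder_min_induct)
  case empty
  then show ?case by simp
next
  case (insert b A)
  have bA: "b \<notin> A" using insert.hyps by auto
  have e1: "{l\<in>insert b A. b < l} = A" using insert.hyps by auto
  have e2: "(\<Sum>j\<in>A. a j * (\<Prod>l\<in>{l\<in>insert b A. j < l}. a l + 1))
      = (\<Sum>j\<in>A. a j * (\<Prod>l\<in>{l\<in>A. j < l}. a l + 1))"
  proof (rule sum.cong)
    fix j assume "j \<in> A"
    then have "{l\<in>insert b A. j < l} = {l\<in>A. j < l}" using insert.hyps by auto
    then show "a j * (\<Prod>l\<in>{l\<in>insert b A. j < l}. a l + 1) = a j * (\<Prod>l\<in>{l\<in>A. j < l}. a l + 1)" by simp
  qed simp
  have "(\<Prod>j\<in>insert b A. a j + 1) = (a b + 1) * (\<Prod>j\<in>A. a j + 1)"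
    using bA insert.hyps by simp
  also have "\<dots> = a b * (\<Prod>j\<in>A. a j + 1) + (1 + (\<Sum>j\<in>A. a j * (\<Prod>l\<in>{l\<in>A. j < l}. a l + 1)))"
    using insert.IH by (simp add: algebra_simps)
  also have "\<dots> = 1 + (\<Sum>j\<in>insert b A. a j * (\<Prod>l\<in>{l\<in>insert b A. j < l}. a l + 1))"
    using bA insert.hyps e1 e2 by simp
  finally show ?case .
qed

definition Dy :: "real^('n::{finite,linorder}) \<Rightarrow> 'n \<Rightarrow> 'n \<Rightarrow> real" where
  "Dy yb k i = (if i = k then 1 else yb$k * (\<Prod>j\<in>{i<..<k}. yb$j + 1))"

lemma D_tele:
  fixes yb :: "real^'n::{finite,linorder}"
  assumes "i < k"
  shows "Dy yb k i = (\<Sum>j\<in>{i<..k}. Dy yb k j * yb$j)"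
proof -
  have s: "{i<..k} = insert k {i<..<k}" using assms by auto
  have c: "(\<Sum>j\<in>{i<..<k}. Dy yb k j * yb$j) = (\<Sum>j\<in>{i<..<k}. yb$j * (\<Prod>l\<in>{l\<in>{i<..<k}. j < l}. yb$l + 1)) * yb$k"
    unfolding sum_distrib_right
  proof (rule sum.cong)
    fix j assume j: "j \<in> {i<..<k}"
    then have "{l\<in>{i<..<k}. j < l} = {j<..<k}" by auto
    then show "Dy yb k j * yb$j = yb$j * (\<Prod>l\<in>{l\<in>{i<..<k}. j < l}. yb$l + 1) * yb$k"
      using j by (simp add: Dy_def less_imp_neq)
  qed simp
  have "Dy yb k i = yb$k * (\<Prod>j\<in>{i<..<k}. yb$j + 1)" using assms by (simp add: Dy_def)
  also have "\<dots> = yb$k * (1 + (\<Sum>j\<in>{i<..<k}. yb$j * (\<Prod>l\<in>{l\<in>{i<..<k}. j < l}. yb$l + 1)))"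
    using prod_tele[of "{i<..<k}" "\<lambda>j. yb$j"] by simp
  also have "\<dots> = (\<Sum>j\<in>{i<..k}. Dy yb k j * yb$j)"
    unfolding s using c by (simp add: Dy_def algebra_simps)
  finally show ?thesis .
qed

lemma Dy_nonneg: "(\<forall>i. 0 \<le> yb$i) \<Longrightarrow> 0 \<le> Dy yb k i"
  unfolding Dy_def by (auto intro!: prod_nonneg mult_nonneg_nonneg)

lemma Ints_pos_ge1: "(x::real) \<in> \<int> \<Longrightarrow> 0 < x \<Longrightarrow> 1 \<le> x"
  by (elim Ints_cases) simp

lemma sum_split_ivl:
  fixes f :: "'n::{finite,linorder} \<Rightarrow> real"
  assumes "i \<le> k"
  shows "(\<Sum>j\<in>{..k}. f j) = (\<Sum>j\<in>{..<i}. f j) + f i + (\<Sum>j\<in>{i<..k}. f j)"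
proof -
  have "{..k} = {..<i} \<union> insert i {i<..k}" using assms by auto
  moreover have "{..<i} \<inter> insert i {i<..k} = {}" by auto
  ultimately have "(\<Sum>j\<in>{..k}. f j) = (\<Sum>j\<in>{..<i}. f j) + (\<Sum>j\<in>insert i {i<..k}. f j)"
    by (simp add: sum.union_disjoint)
  then show ?thesis by simp
qed

lemma valid_cut:
  fixes yb y :: "real^('n::{finite,linorder})"
  assumes yb0: "\<forall>i. 0 \<le> yb$i" and y0: "\<forall>i. 0 \<le> y$i" and iy: "int_vec y" and iyb: "int_vec yb"
    and lt: "yb$i < y$i" and eq: "\<forall>j<i. yb$j = y$j"
  shows "(\<Sum>j\<in>{..k}. Dy yb k j * yb$j) \<le> (\<Sum>j\<in>{..k}. Dy yb k j * y$j)"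
proof -
  define f where "f j = Dy yb k j * (y$j - yb$j)" for j
  have diff: "(\<Sum>j\<in>{..k}. Dy yb k j * y$j) - (\<Sum>j\<in>{..k}. Dy yb k j * yb$j) = (\<Sum>j\<in>{..k}. f j)"
    unfolding f_def by (simp add: sum_subtractf[symmetric] algebra_simps)
  have "0 \<le> (\<Sum>j\<in>{..k}. f j)"
  proof (cases "k < i")
    case True
    then have "\<forall>j\<in>{..k}. f j = 0" using eq unfolding f_def by auto
    then show ?thesis by simp
  next
    case False
    then have ik: "i \<le> k" by simp
    have z: "(\<Sum>j\<in>{..<i}. f j) = 0" using eq unfolding f_def by auto
    have ge1: "1 \<le> y$i - yb$i"
      using iy iyb lt unfolding int_vec_def by (intro Ints_pos_ge1) auto
    show ?thesis
    proof (cases "i = k")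
      case True
      then have "f i = y$i - yb$i" unfolding f_def Dy_def by simp
      then show ?thesis using sum_split_ivl[OF ik, of f] z ge1 True by simp
    next
      case False
      then have ik': "i < k" using ik by simp
      have "f i \<ge> Dy yb k i" unfolding f_def
        using mult_left_mono[OF ge1 Dy_nonneg[OF yb0, of k i]] by simp
      moreover have "(\<Sum>j\<in>{i<..k}. f j) \<ge> (\<Sum>j\<in>{i<..k}. - (Dy yb k j * yb$j))"
        unfolding f_def
      proof (rule sum_mono)
        fix j
        have hj: "- yb$j \<le> y$j - yb$j" using y0 by (simp)
        show "- (Dy yb k j * yb$j) \<le> Dy yb k j * (y$j - yb$j)"
          using mult_left_mono[OF hj Dy_nonneg[OF yb0, of k j]] by simp
      qed
      moreover have "(\<Sum>j\<in>{i<..k}. - (Dy yb k j * yb$j)) = - Dy yb k i"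
        using D_tele[OF ik'] by (simp add: sum_negf)
      ultimately show ?thesis using sum_split_ivl[OF ik, of f] z by linarith
    qed
  qed
  then show ?thesis using diff by linarith
qed


definition lexy :: "real^('n::{finite,linorder}) \<Rightarrow> real^('n::{finite,linorder}) \<Rightarrow> bool" where
  "lexy a b \<longleftrightarrow> a = b \<or> (\<exists>i. a$i < b$i \<and> (\<forall>j<i. a$j = b$j))"

definition Sy :: "real^('n::{finite,linorder}) \<Rightarrow> (real^('n::{finite,linorder})) set" where
  "Sy yb = {y. (\<forall>i. 0 \<le> y$i) \<and> int_vec y \<and> lexy yb y}"

definition Py :: "real^('n::{finite,linorder}) \<Rightarrow> (real^('n::{finite,linorder})) set" where
  "Py yb = {y. (\<forall>i. 0 \<le> y$i) \<and>
      (\<forall>k. (\<Sum>j\<in>{..k}. Dy yb k j * yb$j) \<le> (\<Sum>j\<in>{..k}. Dy yb k j * y$j))}"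

lemma Sy_sub_Py:
  assumes yb0: "\<forall>i. 0 \<le> yb$i" and iyb: "int_vec yb"
  shows "Sy yb \<subseteq> Py yb"
proof
  fix y assume "y \<in> Sy yb"
  then have y0: "\<forall>i. 0 \<le> y$i" and iy: "int_vec y" and lx: "lexy yb y" unfolding Sy_def by auto
  show "y \<in> Py yb"
  proof (cases "yb = y")
    case True then show ?thesis using y0 unfolding Py_def by simp
  next
    case False
    then obtain i where "yb$i < y$i" "\<forall>j<i. yb$j = y$j" using lx unfolding lexy_def by auto
    then show ?thesis using valid_cut[OF yb0 y0 iy iyb] y0 unfolding Py_def by blast
  qed
qed

lemma convex_Py: "convex (Py yb)"
  unfolding convex_def
proof (intro ballI allI impI)
  fix x y and u v :: real
  assume x: "x \<in> Py yb" and y: "y \<in> Py yb" and u: "0 \<le> u" and v: "0 \<le> v" and uv: "u + v = 1"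
  show "u *\<^sub>R x + v *\<^sub>R y \<in> Py yb"
    unfolding Py_def
  proof (intro CollectI conjI allI)
    fix i show "0 \<le> (u *\<^sub>R x + v *\<^sub>R y) $ i" using x y u v unfolding Py_def by simp
  next
    fix k
    let ?R = "(\<Sum>j\<in>{..k}. Dy yb k j * yb$j)"
    have hx: "?R \<le> (\<Sum>j\<in>{..k}. Dy yb k j * x$j)" using x unfolding Py_def by blast
    have hy: "?R \<le> (\<Sum>j\<in>{..k}. Dy yb k j * y$j)" using y unfolding Py_def by blast
    have e: "(\<Sum>j\<in>{..k}. Dy yb k j * (u *\<^sub>R x + v *\<^sub>R y) $ j)
       = u * (\<Sum>j\<in>{..k}. Dy yb k j * x$j) + v * (\<Sum>j\<in>{..k}. Dy yb k j * y$j)"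
      by (simp add: sum.distrib sum_distrib_left algebra_simps)
    have "u * ?R + v * ?R \<le> u * (\<Sum>j\<in>{..k}. Dy yb k j * x$j) + v * (\<Sum>j\<in>{..k}. Dy yb k j * y$j)"
      using mult_left_mono[OF hx u] mult_left_mono[OF hy v] by linarith
    moreover have "u * ?R + v * ?R = ?R" using uv by (metis distrib_right mult_1)
    ultimately show "?R \<le> (\<Sum>j\<in>{..k}. Dy yb k j * (u *\<^sub>R x + v *\<^sub>R y) $ j)"
      using e by simp
  qed
qed

lemma axis_comp: "(y + c *\<^sub>R axis j (1::real)) $ l = y$l + (if l = j then c else 0)"
  by (simp add: axis_def)

lemma Sy_shift:
  assumes "y \<in> Sy yb"
  shows "y + real M *\<^sub>R axis j 1 \<in> Sy yb"
proof -
  let ?y = "y + real M *\<^sub>R axis j 1"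
  have y0: "\<forall>i. 0 \<le> y$i" and iy: "int_vec y" and lx: "lexy yb y" using assms unfolding Sy_def by auto
  have a: "\<forall>i. 0 \<le> ?y$i" using y0 by (simp add: axis_def)
  have b: "int_vec ?y" using iy unfolding int_vec_def by (simp add: axis_def)
  have c: "lexy yb ?y"
  proof (cases "M = 0")
    case True then show ?thesis using lx by simp
  next
    case False
    then have Mp: "0 < real M" by simp
    show ?thesis
    proof (cases "yb = y")
      case True
      then have "yb$j < ?y$j \<and> (\<forall>l<j. yb$l = ?y$l)" using Mp by (simp add: axis_def)
      then show ?thesis unfolding lexy_def by blast
    next
      case False
      then obtain i where i: "yb$i < y$i" "\<forall>l<i. yb$l = y$l" using lx unfolding lexy_def by auto
      show ?thesis
      proof (cases "j < i")
        case True
        then have "yb$j < ?y$j \<and> (\<forall>l<j. yb$l = ?y$l)" using Mp i by (simp add: axis_def)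
        then show ?thesis unfolding lexy_def by blast
      next
        case False
        then have "yb$i < ?y$i \<and> (\<forall>l<i. yb$l = ?y$l)" using Mp i
          by (auto simp add: axis_def)
        then show ?thesis unfolding lexy_def by blast
      qed
    qed
  qed
  show ?thesis using a b c unfolding Sy_def by blast
qed

lemma hull_shift:
  assumes u: "u \<in> convex hull (Sy yb)" and s: "0 \<le> s"
  shows "u + s *\<^sub>R axis j 1 \<in> convex hull (Sy yb)"
proof -
  define M :: nat where "M = nat \<lceil>s\<rceil> + 1"
  have Mp: "0 < real M" unfolding M_def by simp
  have sM: "s \<le> real M" unfolding M_def by linarith
  define a where "a = real M *\<^sub>R axis j (1::real)"
  have "(\<lambda>x. a + x) ` Sy yb \<subseteq> Sy yb"
    using Sy_shift unfolding a_def by (auto simp: add.commute)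
  then have h1: "convex hull ((\<lambda>x. a + x) ` Sy yb) \<subseteq> convex hull (Sy yb)" by (rule hull_mono)
  have h2: "a + u \<in> convex hull ((\<lambda>x. a + x) ` Sy yb)"
    unfolding convex_hull_translation using u by blast
  have "a + u \<in> convex hull (Sy yb)" using h1 h2 by blast
  then have au: "u + a \<in> convex hull (Sy yb)" by (simp add: add.commute)
  have "(1 - s / real M) *\<^sub>R u + (s / real M) *\<^sub>R (u + a) \<in> convex hull (Sy yb)"
    apply (rule convexD[OF convex_convex_hull u au])
    using Mp sM s by (auto simp: field_simps)
  moreover have "(1 - s / real M) *\<^sub>R u + (s / real M) *\<^sub>R (u + a) = u + s *\<^sub>R axis j 1"
    unfolding a_def using Mp by (simp add: algebra_simps)
  ultimately show ?thesis by simp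
qed

lemma hull_orthant:
  assumes u: "u \<in> convex hull (Sy yb)" and r: "\<forall>i. 0 \<le> r$i"
  shows "u + r \<in> convex hull (Sy yb)"
proof -
  have "finite F \<Longrightarrow> u + (\<Sum>j\<in>F. r$j *\<^sub>R axis j 1) \<in> convex hull (Sy yb)" for F
  proof (induction F rule: finite_induct)
    case empty then show ?case using u by simp
  next
    case (insert x F)
    then have "u + (\<Sum>j\<in>F. r$j *\<^sub>R axis j 1) + r$x *\<^sub>R axis x 1 \<in> convex hull (Sy yb)"
      using hull_shift r by blast
    then show ?case using insert by (simp add: algebra_simps)
  qed
  from this[of UNIV] show ?thesis
    using basis_expansion[of r] by (simp add: scalar_mult_eq_scaleR)
qed


lemma Py_sub:
  fixes yb :: "real^('n::{finite,linorder})"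
  assumes yb0: "\<forall>i. 0 \<le> yb$i" and iyb: "int_vec yb"
  shows "Py yb \<subseteq> convex hull (Sy yb)"
proof -
  let ?C = "convex hull (Sy yb)"
  let ?F = "\<lambda>z. {i. \<exists>j\<le>i. z$j \<noteq> yb$j}"
  have main: "\<forall>z. card (?F z) = N \<longrightarrow> z \<in> Py yb \<longrightarrow> z \<in> ?C" for N
  proof (induction N rule: less_induct)
    case (less N)
    show ?case
    proof (intro allI impI)
      fix z assume cz: "card (?F z) = N" and zP: "z \<in> Py yb"
      have z0: "\<forall>i. 0 \<le> z$i" using zP unfolding Py_def by blast
      have zc: "\<And>k. (\<Sum>j\<in>{..k}. Dy yb k j * yb$j) \<le> (\<Sum>j\<in>{..k}. Dy yb k j * z$j)"
        using zP unfolding Py_def by blast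
      show "z \<in> ?C"
      proof (cases "z = yb")
        case True
        have "yb \<in> Sy yb" using yb0 iyb unfolding Sy_def lexy_def by simp
        then show ?thesis using True by (simp add: hull_inc)
      next
        case False
        define D where "D = {j. z$j \<noteq> yb$j}"
        have Dne: "D \<noteq> {}" using False unfolding D_def by (auto simp: vec_eq_iff)
        define m where "m = Min D"
        have mD: "m \<in> D" unfolding m_def using Dne by (simp add: Min_in)
        have before: "\<forall>j<m. z$j = yb$j"
        proof (intro allI impI)
          fix j assume "j < m"
          show "z$j = yb$j"
          proof (rule ccontr)
            assume "z$j \<noteq> yb$j"
            then have "j \<in> D" unfolding D_def by simp
            then have "m \<le> j" unfolding m_def by (simp add: Min_le)
            then show False using \<open>j < m\<close> by simp
          qed
        qed
        have bsum: "(\<Sum>j\<in>{..<m}. Dy yb k j * z$j) = (\<Sum>j\<in>{..<m}. Dy yb k j * yb$j)" for k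
          using before by (intro sum.cong) auto
        have "(\<Sum>j\<in>{..m}. Dy yb m j * yb$j) \<le> (\<Sum>j\<in>{..m}. Dy yb m j * z$j)" by (rule zc)
        then have "yb$m \<le> z$m"
          using sum_split_ivl[of m m "\<lambda>j. Dy yb m j * yb$j"] sum_split_ivl[of m m "\<lambda>j. Dy yb m j * z$j"]
            bsum[of m] by (simp add: Dy_def)
        moreover have "z$m \<noteq> yb$m" using mD unfolding D_def by simp
        ultimately have tpos: "0 < z$m - yb$m" by simp
        define t where "t = z$m - yb$m"
        define v where "v = (\<chi> j. if j < m then yb$j else if j = m then yb$m + 1 else 0)"
        have vS: "v \<in> Sy yb"
        proof -
          have "\<forall>i. 0 \<le> v$i" using yb0 unfolding v_def by simp
          moreover have "int_vec v" using iyb unfolding v_def int_vec_def by simp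
          moreover have "yb$m < v$m \<and> (\<forall>j<m. yb$j = v$j)" unfolding v_def by simp
          then have "lexy yb v" unfolding lexy_def by blast
          ultimately show ?thesis unfolding Sy_def by blast
        qed
        then have vC: "v \<in> ?C" by (simp add: hull_inc)
        show ?thesis
        proof (cases "1 \<le> t")
          case True
          have "\<forall>i. 0 \<le> (z - v)$i"
          proof
            fix i
            show "0 \<le> (z - v)$i"
              using True z0 before unfolding v_def t_def
              by (cases "i < m"; cases "i = m") auto
          qed
          from hull_orthant[OF vC this] show ?thesis by simp
        next
          case False
          then have t1: "t < 1" by simp
          have tp: "0 < t" using tpos unfolding t_def .
          define z' where "z' = (\<chi> j. if j \<le> m then yb$j else z$j / (1 - t))"
          have nz: "(1 - t) * (z$i / (1 - t)) = z$i" for i using t1 by simp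
          have zm: "z$m = yb$m + t" unfolding t_def by simp
          have zeq: "z = t *\<^sub>R v + (1 - t) *\<^sub>R z'"
          proof (subst vec_eq_iff, intro allI)
            fix i
            show "z$i = (t *\<^sub>R v + (1 - t) *\<^sub>R z')$i"
            proof (cases "i < m")
              case True
              then have "v$i = yb$i" "z'$i = yb$i" "z$i = yb$i" using before unfolding v_def z'_def by auto
              then show ?thesis by (simp add: algebra_simps)
            next
              case False
              show ?thesis
              proof (cases "i = m")
                case True
                then have "v$i = yb$m + 1" "z'$i = yb$m" using True unfolding v_def z'_def by auto
                then show ?thesis using zm True by (simp add: algebra_simps)
              next
                case False
                then have "v$i = 0" "z'$i = z$i / (1 - t)" using \<open>\<not> i < m\<close> unfolding v_def z'_def by auto
                then show ?thesis using nz[of i] by simp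
              qed
            qed
          qed
          have z'0: "\<forall>i. 0 \<le> z'$i" using yb0 z0 t1 unfolding z'_def by simp
          have z'c: "(\<Sum>j\<in>{..k}. Dy yb k j * yb$j) \<le> (\<Sum>j\<in>{..k}. Dy yb k j * z'$j)" for k
          proof (cases "k \<le> m")
            case True
            then have "(\<Sum>j\<in>{..k}. Dy yb k j * z'$j) = (\<Sum>j\<in>{..k}. Dy yb k j * yb$j)"
              unfolding z'_def by (intro sum.cong) auto
            then show ?thesis by simp
          next
            case False
            then have mk: "m < k" by simp
            have b': "(\<Sum>j\<in>{..<m}. Dy yb k j * z'$j) = (\<Sum>j\<in>{..<m}. Dy yb k j * yb$j)"
              unfolding z'_def by (intro sum.cong) auto
            have m': "z'$m = yb$m" unfolding z'_def by simp
            have r': "(\<Sum>j\<in>{m<..k}. Dy yb k j * z'$j) = (\<Sum>j\<in>{m<..k}. Dy yb k j * z$j) / (1 - t)"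
              unfolding z'_def sum_divide_distrib by (intro sum.cong) auto
            have "(\<Sum>j\<in>{..k}. Dy yb k j * yb$j) \<le> (\<Sum>j\<in>{..k}. Dy yb k j * z$j)" by (rule zc)
            then have "(\<Sum>j\<in>{m<..k}. Dy yb k j * yb$j) - t * Dy yb k m \<le> (\<Sum>j\<in>{m<..k}. Dy yb k j * z$j)"
              using sum_split_ivl[of m k "\<lambda>j. Dy yb k j * yb$j"] sum_split_ivl[of m k "\<lambda>j. Dy yb k j * z$j"]
                bsum[of k] mk unfolding t_def by (simp add: algebra_simps)
            then have "(1 - t) * Dy yb k m \<le> (\<Sum>j\<in>{m<..k}. Dy yb k j * z$j)"
              using D_tele[OF mk] by (simp add: algebra_simps)
            then have "Dy yb k m \<le> (\<Sum>j\<in>{m<..k}. Dy yb k j * z'$j)"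
              unfolding r' using t1 by (simp add: field_simps)
            then have "(\<Sum>j\<in>{m<..k}. Dy yb k j * yb$j) \<le> (\<Sum>j\<in>{m<..k}. Dy yb k j * z'$j)"
              using D_tele[OF mk] by simp
            then show ?thesis
              using sum_split_ivl[of m k "\<lambda>j. Dy yb k j * yb$j"] sum_split_ivl[of m k "\<lambda>j. Dy yb k j * z'$j"]
                b' m' mk by simp
          qed
          have z'P: "z' \<in> Py yb" unfolding Py_def using z'0 z'c by blast
          have sub: "?F z' \<subset> ?F z"
          proof
            show "?F z' \<subseteq> ?F z"
            proof
              fix i assume "i \<in> ?F z'"
              then obtain j where "j \<le> i" "z'$j \<noteq> yb$j" by blast
              then have "m < j" unfolding z'_def by (cases "j \<le> m") auto
              then have "m \<le> i" using \<open>j \<le> i\<close> by simp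
              then show "i \<in> ?F z" using mD unfolding D_def by blast
            qed
            have "m \<in> ?F z" using mD unfolding D_def by blast
            moreover have "m \<notin> ?F z'" unfolding z'_def by auto
            ultimately show "?F z' \<noteq> ?F z" by blast
          qed
          then have "card (?F z') < N" using cz psubset_card_mono[OF finite sub] by simp
          then have z'C: "z' \<in> ?C" using less.IH z'P by blast
          have "t *\<^sub>R v + (1 - t) *\<^sub>R z' \<in> ?C"
            by (rule convexD[OF convex_convex_hull vC z'C]) (use tp t1 in auto)
          then show ?thesis using zeq by simp
        qed
      qed
    qed
  qed
  show ?thesis using main by blast
qed

lemma core:
  fixes yb :: "real^('n::{finite,linorder})"
  assumes yb0: "\<forall>i. 0 \<le> yb$i" and iyb: "int_vec yb"
  shows "convex hull (Sy yb) = Py yb"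
proof
  show "convex hull (Sy yb) \<subseteq> Py yb"
    using hull_minimal[where S=convex, OF Sy_sub_Py[OF yb0 iyb] convex_Py[of yb]] .
  show "Py yb \<subseteq> convex hull (Sy yb)" by (rule Py_sub[OF yb0 iyb])
qed


definition Tc :: "('n::{finite,linorder} \<Rightarrow> real^('n::{finite,linorder})) \<Rightarrow> real^('n::{finite,linorder}) \<Rightarrow> real^('n::{finite,linorder})" where
  "Tc c x = (\<chi> i. c i \<bullet> x)"

lemma Tc_nth [simp]: "Tc c x $ i = c i \<bullet> x"
  unfolding Tc_def by simp

lemma linear_Tc: "linear (Tc c)"
  by (rule linearI) (simp_all add: vec_eq_iff inner_add_right)

lemma Tc_int:
  assumes "\<forall>i. int_vec (c i)" "int_vec x"
  shows "int_vec (Tc c x)"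
  using assms unfolding int_vec_def by (auto simp: inner_vec_def intro!: Ints_sum Ints_mult)

lemma coord_expr:
  assumes lb: "lattice_basis c"
  shows "\<exists>l. (\<forall>i. l i \<in> \<int>) \<and> (\<forall>x. x$j = (\<Sum>i\<in>UNIV. l i * (Tc c x $ i)))"
proof -
  have "int_vec (axis j (1::real))" unfolding int_vec_def axis_def by simp
  then obtain l where l: "\<forall>i. l i \<in> \<int>" "axis j 1 = (\<Sum>i\<in>UNIV. l i *\<^sub>R c i)"
    using lb unfolding lattice_basis_def by blast
  have "x$j = (\<Sum>i\<in>UNIV. l i * (Tc c x $ i))" for x
  proof -
    have "x$j = axis j 1 \<bullet> x" by (simp add: inner_axis')
    also have "\<dots> = (\<Sum>i\<in>UNIV. l i * (c i \<bullet> x))"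
      unfolding l(2) by (simp add: inner_sum_left)
    finally show ?thesis by simp
  qed
  then show ?thesis using l(1) by blast
qed

lemma Tc_inj: "lattice_basis c \<Longrightarrow> inj (Tc c)"
proof (rule injI)
  fix x y assume lb: "lattice_basis c" and e: "Tc c x = Tc c y"
  show "x = y"
  proof (subst vec_eq_iff, intro allI)
    fix j
    obtain l where "\<forall>x. x$j = (\<Sum>i\<in>UNIV. l i * (Tc c x $ i))" using coord_expr[OF lb, of j] by blast
    then show "x$j = y$j" using e by metis
  qed
qed

lemma Tc_int_rev:
  assumes lb: "lattice_basis c" and i: "int_vec (Tc c x)"
  shows "int_vec x"
  unfolding int_vec_def
proof
  fix j
  obtain l where l: "\<forall>i. l i \<in> \<int>" "\<forall>x. x$j = (\<Sum>i\<in>UNIV. l i * (Tc c x $ i))"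
    using coord_expr[OF lb, of j] by blast
  show "x$j \<in> \<int>" using l i unfolding int_vec_def by (auto intro!: Ints_sum Ints_mult)
qed

lemma lex_le_Tc:
  assumes lb: "lattice_basis c"
  shows "lex_le c a b \<longleftrightarrow> lexy (Tc c a) (Tc c b)"
proof -
  have inj: "inj (Tc c)" by (rule Tc_inj[OF lb])
  have "a = b \<longleftrightarrow> Tc c a = Tc c b" using inj by (auto dest: injD)
  moreover have "(\<exists>i. c i \<bullet> a \<noteq> c i \<bullet> b \<and> (\<forall>j<i. c j \<bullet> a = c j \<bullet> b) \<and> c i \<bullet> a < c i \<bullet> b)
      \<longleftrightarrow> (\<exists>i. Tc c a $ i < Tc c b $ i \<and> (\<forall>j<i. Tc c a $ j = Tc c b $ j))"
    (is "?L \<longleftrightarrow> ?R")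
  proof
    assume ?L then show ?R by auto
  next
    assume ?R
    then obtain i where i: "c i \<bullet> a < c i \<bullet> b" "\<forall>j<i. c j \<bullet> a = c j \<bullet> b" by auto
    show ?L by (rule exI[of _ i]) (use i in auto)
  qed
  ultimately show ?thesis unfolding lex_le_def lex_less_def lexy_def by auto
qed

theorem proposition1:
  fixes c :: "'n::{finite,linorder} \<Rightarrow> real^('n::{finite,linorder})" and K :: "(real^('n::{finite,linorder})) set" and xbar :: "real^('n::{finite,linorder})"
  assumes "lattice_basis c"
    and "K = {x. \<forall>i. c i \<bullet> x \<ge> 0}"
    and "xbar \<in> K" and "int_vec xbar" and "xbar \<noteq> 0"
  shows "Q c K xbar =
    {x. (\<forall>i. c i \<bullet> x \<ge> 0) \<and>
        (\<forall>k. (\<Sum>i\<in>{..k}. lexd c xbar k i * (c i \<bullet> x))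
              \<ge> (\<Sum>i\<in>{..k}. lexd c xbar k i * (c i \<bullet> xbar)))}"
proof -
  note lb = assms(1)
  define yb where "yb = Tc c xbar"
  have cint: "\<forall>i. int_vec (c i)" using lb unfolding lattice_basis_def by blast
  have yb0: "\<forall>i. 0 \<le> yb$i" using assms(2,3) unfolding yb_def by simp
  have iyb: "int_vec yb" unfolding yb_def by (rule Tc_int[OF cint assms(4)])
  have lexdD: "lexd c xbar = Dy yb" unfolding yb_def by (intro ext) (simp add: lexd_def Dy_def)
  have inj: "inj (Tc c)" by (rule Tc_inj[OF lb])
  have surj: "surj (Tc c)" by (rule linear_inj_imp_surj[OF linear_Tc inj])
  define A where "A = {x \<in> K. int_vec x \<and> lex_le c xbar x}"
  have TA: "Tc c ` A = Sy yb"
  proof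
    show "Tc c ` A \<subseteq> Sy yb"
      unfolding A_def Sy_def yb_def using assms(2) Tc_int[OF cint] lex_le_Tc[OF lb] by auto
  next
    show "Sy yb \<subseteq> Tc c ` A"
    proof
      fix y assume y: "y \<in> Sy yb"
      obtain x where x: "y = Tc c x" using surj by blast
      have "x \<in> K" using y x assms(2) unfolding Sy_def by auto
      moreover have "int_vec x" using y x Tc_int_rev[OF lb] unfolding Sy_def by auto
      moreover have "lex_le c xbar x" using y x lex_le_Tc[OF lb] unfolding Sy_def yb_def by auto
      ultimately show "y \<in> Tc c ` A" unfolding A_def using x by blast
    qed
  qed
  have img: "Tc c ` Q c K xbar = Py yb"
    unfolding Q_def A_def[symmetric] convex_hull_linear_image[OF linear_Tc] TA
    by (rule core[OF yb0 iyb])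
  show ?thesis
  proof (intro set_eqI)
    fix x
    have "x \<in> Q c K xbar \<longleftrightarrow> Tc c x \<in> Tc c ` Q c K xbar" using inj by (auto dest: injD)
    also have "\<dots> \<longleftrightarrow> Tc c x \<in> Py yb" using img by simp
    also have "\<dots> \<longleftrightarrow> x \<in> {x. (\<forall>i. c i \<bullet> x \<ge> 0) \<and>
        (\<forall>k. (\<Sum>i\<in>{..k}. lexd c xbar k i * (c i \<bullet> x))
              \<ge> (\<Sum>i\<in>{..k}. lexd c xbar k i * (c i \<bullet> xbar)))}"
      unfolding Py_def lexdD yb_def by simp
    finally show "x \<in> Q c K xbar \<longleftrightarrow> x \<in> {x. (\<forall>i. c i \<bullet> x \<ge> 0) \<and>
        (\<forall>k. (\<Sum>i\<in>{..k}. lexd c xbar k i * (c i \<bullet> x))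
              \<ge> (\<Sum>i\<in>{..k}. lexd c xbar k i * (c i \<bullet> xbar)))}" .
  qed
qed

end
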